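(* Let $n\ge 3$, $0<m<\frac{n-2}{n}$, $\rho>0$, and let $\alpha,\beta$ satisfy $\alpha=\frac{2\beta+\rho}{1-m}$, $\beta>\frac{m\rho}{n-2-mn}$, and $\alpha>n\beta$. Let $v$ be a radially symmetric solution of $$\frac{n-1}{m}\Delta v^m+\alpha v+\beta x\cdot\nabla v=0,\quad v>0,\quad\text{in }\mathbb{R}^n$$ (equivalently, a solution of the corresponding radial ODE on $(0,\infty)$ with $v(0)=\eta>0$, $v'(0)=0$). Then $$\lim_{r\to\infty}r^{n-2}v(r)^m=\infty.$$
   Context: $v(r)$ denotes the value of the radially symmetric function $v$ at any point with $|x|=r$. *)

theory Defs
  imports Complex_Main
begin

end

theory Submission
  imports Defs "HOL-Analysis.Analysis" "HOL-Real_Asymp.Real_Asymp"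
begin

lemma aux1:
  fixes N P a m x b s y :: real
  assumes "N > 1"
  shows "- (P * (a * m * x + b * s * m * y) / (N - 1)) + (m * b / (N - 1) * (N * P) * x + y * (m * b / (N - 1) * (s * P)))
    = - (m / (N - 1) * (a - N * b) * P * x)"
proof -
  have "N - 1 \<noteq> 0" using assms by simp
  then show ?thesis by (simp add: divide_simps) (simp add: algebra_simps)
qed

lemma pow_split: "n \<ge> 1 \<Longrightarrow> (r::real) ^ n = r * r ^ (n - 1)"
  by (cases n) auto

theorem lemma3p2:
  fixes n :: nat and m \<rho> \<alpha> \<beta> \<eta> :: real
    and v v' w' w'' :: "real \<Rightarrow> real"
  assumes n: "n \<ge> 3"
    and m_pos: "0 < m" and m_lt: "m < (real n - 2) / real n"
    and rho: "\<rho> > 0"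
    and alpha: "\<alpha> = (2 * \<beta> + \<rho>) / (1 - m)"
    and beta: "\<beta> > m * \<rho> / (real n - 2 - m * real n)"
    and alpha_beta: "\<alpha> > real n * \<beta>"
    and pos: "\<And>r. r \<ge> 0 \<Longrightarrow> v r > 0"
    and init: "v 0 = \<eta>" "\<eta> > 0" "v' 0 = 0"
    and dv: "\<And>r. r \<ge> 0 \<Longrightarrow> (v has_real_derivative v' r) (at r within {0..})"
    and dw: "\<And>r. r > 0 \<Longrightarrow> ((\<lambda>s. v s powr m) has_real_derivative w' r) (at r)"
    and dw': "\<And>r. r > 0 \<Longrightarrow> (w' has_real_derivative w'' r) (at r)"
    and ode: "\<And>r. r > 0 \<Longrightarrow>
      (real n - 1) / m * (w'' r + (real n - 1) / r * w' r) + \<alpha> * v r + \<beta> * r * v' r = 0"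
  shows "filterlim (\<lambda>r. r ^ (n - 2) * v r powr m) at_top at_top"
proof -
  define w where "w = (\<lambda>s. v s powr m)"
  define H where "H = (\<lambda>r. \<alpha> * m * w r + \<beta> * r * w' r)"
  define g where "g = (\<lambda>r. r ^ (n - 1) * w' r)"
  define a where "a = \<alpha> * m / \<beta>"
  define c where "c = \<alpha> * m - \<beta> * (real n - 2)"
  have n0: "real n > 0" and n1: "real n - 1 > 0" using n by auto
  have Dpos: "real n - 2 - m * real n > 0"
    using m_lt n0 by (simp add: field_simps)
  have m1: "m < 1" using m_lt n0 by (smt (verit) divide_less_eq_1_pos)
  have bpos: "\<beta> > 0"
    using beta Dpos m_pos rho by (smt (verit) divide_pos_pos mult_pos_pos)
  have bD: "\<beta> * (real n - 2 - m * real n) > m * \<rho>"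
    using beta Dpos by (simp add: pos_divide_less_eq mult.commute)
  have aeq: "\<alpha> * (1 - m) = 2 * \<beta> + \<rho>" using alpha m1 by simp
  have apos: "\<alpha> > 0" using alpha m1 bpos rho by simp
  have cneg: "c < 0"
  proof -
    have e1: "m * (\<alpha> * (1 - m)) = m * (2 * \<beta> + \<rho>)" by (simp add: aeq)
    have e2: "m * \<rho> < \<beta> * (real n - 2) - \<beta> * m * real n" using bD by (simp add: algebra_simps)
    have e3: "m * (2 * \<beta> + \<rho>) = 2 * m * \<beta> + m * \<rho>" by (simp add: algebra_simps)
    have e4: "(real n - 2) * (1 - m) * \<beta> = \<beta> * (real n - 2) - \<beta> * m * real n + 2 * m * \<beta>"
      by (simp add: algebra_simps)
    have "m * (\<alpha> * (1 - m)) < (real n - 2) * (1 - m) * \<beta>"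
      using e1 e2 e3 e4 by linarith
    then have "(1 - m) * (m * \<alpha>) < (1 - m) * ((real n - 2) * \<beta>)" by (simp add: algebra_simps)
    then have "m * \<alpha> < (real n - 2) * \<beta>" using m1 by simp
    then show ?thesis unfolding c_def by (simp add: algebra_simps)
  qed
  have alt0: "\<alpha> * m < (real n - 2) * \<beta>" using cneg unfolding c_def by (simp add: algebra_simps)
  have alt: "a < real n - 2" using alt0 bpos unfolding a_def by (simp add: pos_divide_less_eq)
  have vD: "(v has_real_derivative v' r) (at r)" if "r > 0" for r
  proof -
    have "(v has_real_derivative v' r) (at r within {0<..})"
      by (rule has_field_derivative_subset[OF dv[of r]]) (use that in auto)
    moreover have "at r within {0<..} = at r" using that by (intro at_within_open) auto
    ultimately show ?thesis by simp
  qed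
  have wD: "(w has_real_derivative w' r) (at r)" if "r > 0" for r
    using dw[OF that] unfolding w_def .
  have w'eq: "w' r = m * v r powr (m - 1) * v' r" if "r > 0" for r
    using DERIV_unique[OF dw[OF that] DERIV_fun_powr[OF vD[OF that] pos, of m]] that by simp
  have p1: "v r powr (1 - m) * w' r = m * v' r" if "r > 0" for r
  proof -
    have "v r powr (1 - m) * v r powr (m - 1) = 1"
      using pos[of r] that by (simp add: powr_add[symmetric])
    moreover have "v r powr (1 - m) * w' r = (v r powr (1 - m) * v r powr (m - 1)) * (m * v' r)"
      by (simp only: w'eq[OF that] mult_ac)
    ultimately show ?thesis by simp
  qed
  have p2: "v r powr (1 - m) * w r = v r" if "r \<ge> 0" for r
    using pos[OF that] unfolding w_def by (simp add: powr_add[symmetric])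
  have VH: "v r powr (1 - m) * H r = \<alpha> * m * v r + \<beta> * r * m * v' r" if "r > 0" for r
  proof -
    have "v r powr (1 - m) * H r = \<alpha> * m * (v r powr (1 - m) * w r) + \<beta> * r * (v r powr (1 - m) * w' r)"
      unfolding H_def by (simp add: algebra_simps)
    then show ?thesis using p1[OF that] p2[of r] that by simp
  qed
  have E1: "(real n - 1) * (w'' r + (real n - 1) / r * w' r) = - (v r powr (1 - m) * H r)" if "r > 0" for r
  proof -
    define X where "X = w'' r + (real n - 1) / r * w' r"
    have "m * ((real n - 1) / m * X + \<alpha> * v r + \<beta> * r * v' r) = 0"
      using ode[OF that] unfolding X_def by simp
    then have "m * ((real n - 1) / m * X) + m * \<alpha> * v r + m * \<beta> * r * v' r = 0"
      by (simp only: distrib_left mult.assoc)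
    moreover have "m * ((real n - 1) / m * X) = (real n - 1) * X" using m_pos by simp
    ultimately have "(real n - 1) * (w'' r + (real n - 1) / r * w' r) + m * \<alpha> * v r + m * \<beta> * r * v' r = 0"
      unfolding X_def by simp
    then show ?thesis using VH[OF that] by (simp add: algebra_simps)
  qed
  have Q: "w'' r + (real n - 1) / r * w' r = - (v r powr (1 - m) * H r) / (real n - 1)" if "r > 0" for r
  proof -
    have "w'' r + (real n - 1) / r * w' r = ((real n - 1) * (w'' r + (real n - 1) / r * w' r)) / (real n - 1)"
      using n1 by simp
    also have "\<dots> = - (v r powr (1 - m) * H r) / (real n - 1)" using E1[OF that] by simp
    finally show ?thesis .
  qed
  have HD: "(H has_real_derivative (c * w' r - \<beta> * r * v r powr (1 - m) * H r / (real n - 1))) (at r)"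
    if "r > 0" for r
  proof -
    have "(H has_real_derivative (\<alpha> * m * w' r + (\<beta> * 1 * w' r + \<beta> * r * w'' r))) (at r)"
    proof -
      have a: "((\<lambda>x. \<beta> * x) has_real_derivative \<beta> * 1) (at r)" by (rule DERIV_cmult[OF DERIV_ident])
      have b: "((\<lambda>x. \<beta> * x * w' x) has_real_derivative \<beta> * 1 * w' r + \<beta> * r * w'' r) (at r)"
        using DERIV_mult[OF a dw'[OF that]] by (simp add: ac_simps)
      have c: "((\<lambda>x. \<alpha> * m * w x) has_real_derivative \<alpha> * m * w' r) (at r)"
        by (rule DERIV_cmult[OF wD[OF that]])
      show ?thesis using DERIV_add[OF c b] unfolding H_def by simp
    qed
    moreover have "\<alpha> * m * w' r + (\<beta> * 1 * w' r + \<beta> * r * w'' r)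
       = c * w' r - \<beta> * r * v r powr (1 - m) * H r / (real n - 1)"
    proof -
      have 0: "w'' r = - (v r powr (1 - m) * H r) / (real n - 1) - (real n - 1) / r * w' r"
        using Q[OF that] by linarith
      have 1: "\<beta> * r * w'' r = \<beta> * r * (- (v r powr (1 - m) * H r) / (real n - 1))
          - \<beta> * r * ((real n - 1) / r * w' r)" unfolding 0 by (simp only: right_diff_distrib)
      have 2: "\<beta> * r * ((real n - 1) / r * w' r) = \<beta> * (real n - 1) * w' r" using that by simp
      have 3: "\<beta> * r * (- (v r powr (1 - m) * H r) / (real n - 1)) = - (\<beta> * r * v r powr (1 - m) * H r / (real n - 1))"
        by simp
      show ?thesis unfolding c_def using 1 2 3 by (simp add: algebra_simps)
    qed
    ultimately show ?thesis by simp
  qed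
  have gD: "(g has_real_derivative (- (r ^ (n - 1) * v r powr (1 - m) * H r / (real n - 1)))) (at r)"
    if "r > 0" for r
  proof -
    have "(g has_real_derivative (real (n - 1) * r ^ (n - 1 - Suc 0) * w' r + r ^ (n - 1) * w'' r)) (at r)"
      unfolding g_def using DERIV_mult[OF DERIV_pow dw'[OF that], of "n - 1"] by (simp add: ac_simps)
    moreover have "real (n - 1) * r ^ (n - 1 - Suc 0) * w' r + r ^ (n - 1) * w'' r
        = r ^ (n - 1) * (w'' r + (real n - 1) / r * w' r)"
    proof -
      have e: "n - 1 = Suc (n - 1 - Suc 0)" using n by arith
      have a1: "r ^ (n - 1) = r * r ^ (n - 1 - Suc 0)" by (metis e power_Suc)
      have a2: "real (n - 1) = real n - 1" using n by simp
      have "r ^ (n - 1) * ((real n - 1) / r * w' r) = (real n - 1) * r ^ (n - 1 - Suc 0) * w' r"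
        unfolding a1 using that by simp
      then show ?thesis unfolding a2 by (simp add: distrib_left)
    qed
    ultimately show ?thesis unfolding Q[OF that] by (simp add: mult.assoc)
  qed
  have vcont: "continuous_on {0..} v"
    by (rule DERIV_continuous_on[OF dv]) simp
  have wcont: "continuous_on {0..} w"
    unfolding w_def using pos by (intro continuous_on_powr vcont continuous_on_const) force
  obtain x0 where x0: "x0 \<in> {0..1}" "\<forall>y\<in>{0..1}. v y \<le> v x0"
    using continuous_attains_sup[of "{0..1::real}" v] continuous_on_subset[OF vcont, of "{0..1}"] by auto
  define B where "B = v x0"
  have B: "v s \<le> B" if "0 \<le> s" "s \<le> 1" for s using x0 that B_def by auto
  have Bpos: "B > 0" using pos x0 B_def by auto
  define k0 where "k0 = m / (real n - 1) * (\<alpha> - real n * \<beta>)"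
  have k0pos: "k0 \<ge> 0" using m_pos n1 alpha_beta unfolding k0_def by simp
  define Dc where "Dc = m * \<beta> / (real n - 1)"
  have Dcpos: "Dc \<ge> 0" using m_pos n1 bpos unfolding Dc_def by simp
  define F where "F = (\<lambda>r. g r + Dc * r ^ n * v r)"
  define C where "C = k0 * B"
  define K where "K = C + 2 * Dc * B"
  have Kpos: "K \<ge> 0" unfolding K_def C_def using k0pos Bpos Dcpos by simp
  have FD: "(F has_real_derivative (- (k0 * s ^ (n - 1) * v s))) (at s)" if "s > 0" for s
  proof -
    have d1: "((\<lambda>r. Dc * r ^ n) has_real_derivative Dc * (real n * s ^ (n - Suc 0))) (at s)"
      by (rule DERIV_cmult[OF DERIV_pow])
    have d2: "((\<lambda>r. Dc * r ^ n * v r) has_real_derivative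
        Dc * (real n * s ^ (n - Suc 0)) * v s + v' s * (Dc * s ^ n)) (at s)"
      by (rule DERIV_mult[OF d1 vD[OF that]])
    have d3: "(F has_real_derivative (- (s ^ (n - 1) * v s powr (1 - m) * H s / (real n - 1)))
        + (Dc * (real n * s ^ (n - Suc 0)) * v s + v' s * (Dc * s ^ n))) (at s)"
      unfolding F_def by (rule DERIV_add[OF gD[OF that] d2])
    have sn: "s ^ n = s * s ^ (n - 1)"
      using pow_split[of n s] n by simp
    have X: "s ^ (n - 1) * v s powr (1 - m) * H s = s ^ (n - 1) * (\<alpha> * m * v s + \<beta> * s * m * v' s)"
      using VH[OF that] by (metis mult.assoc)
    have "- (s ^ (n - 1) * v s powr (1 - m) * H s / (real n - 1))
        + (Dc * (real n * s ^ (n - Suc 0)) * v s + v' s * (Dc * s ^ n)) = - (k0 * s ^ (n - 1) * v s)"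
      unfolding X sn Dc_def k0_def using aux1[of "real n" "s ^ (n - 1)" \<alpha> m "v s" \<beta> s "v' s"] n by simp
    then show ?thesis using d3 by simp
  qed
  have Fb: "\<bar>F r - F s\<bar> \<le> C * r ^ n" if hs: "0 < s" "s < r" "r \<le> 1" for r s
  proof -
    obtain z where z: "s < z" "z < r" "F r - F s = (r - s) * (- (k0 * z ^ (n - 1) * v z))"
    proof -
      have "\<exists>z. s < z \<and> z < r \<and> F r - F s = (r - s) * (- (k0 * z ^ (n - 1) * v z))"
        by (rule MVT2[OF hs(2)]) (rule FD; use hs in linarith)
      then show ?thesis using that by blast
    qed
    have zp: "0 \<le> k0 * z ^ (n - 1) * v z" using k0pos pos[of z] z that by simp
    have h1: "z ^ (n - 1) * v z \<le> r ^ (n - 1) * B"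
      using z that pos[of z] B[of z] by (intro mult_mono power_mono) auto
    have h2: "k0 * z ^ (n - 1) * v z \<le> k0 * r ^ (n - 1) * B"
      using mult_left_mono[OF h1 k0pos] by (simp add: mult.assoc)
    have "\<bar>F r - F s\<bar> = (r - s) * (k0 * z ^ (n - 1) * v z)"
    proof -
      have "\<bar>F r - F s\<bar> = \<bar>r - s\<bar> * \<bar>k0 * z ^ (n - 1) * v z\<bar>" unfolding z(3) by (simp add: abs_mult)
      then show ?thesis using zp hs by simp
    qed
    also have "\<dots> \<le> r * (k0 * r ^ (n - 1) * B)"
      by (rule mult_mono) (use h2 zp hs in auto)
    also have "\<dots> = C * r ^ n"
      using pow_split[of n r] n unfolding C_def by simp
    finally show ?thesis .
  qed
  have gb1: "\<bar>g r - g s\<bar> \<le> K * r ^ n" if "0 < s" "s < r" "r \<le> 1" for r s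
  proof -
    have e: "g r - g s = (F r - F s) - Dc * r ^ n * v r + Dc * s ^ n * v s" unfolding F_def by simp
    have sr: "s ^ n \<le> r ^ n" using that by (intro power_mono) auto
    have t1: "0 \<le> Dc * r ^ n * v r" using Dcpos pos[of r] that by simp
    have t2: "Dc * r ^ n * v r \<le> Dc * r ^ n * B"
      using B[of r] that Dcpos by (intro mult_left_mono) auto
    have t3: "0 \<le> Dc * s ^ n * v s" using Dcpos pos[of s] that by simp
    have t4: "Dc * s ^ n * v s \<le> Dc * r ^ n * B"
      using B[of s] that Dcpos sr Bpos pos[of s] by (intro mult_mono mult_left_mono) auto
    show ?thesis using Fb[OF that] e t1 t2 t3 t4 unfolding K_def by (simp add: algebra_simps)
  qed
  have tw: "(w \<longlongrightarrow> w 0) (at_right 0)"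
  proof -
    have "continuous (at 0 within {0..}) w"
      using wcont by (simp add: continuous_on_eq_continuous_within)
    then have "(w \<longlongrightarrow> w 0) (at 0 within {0..})" by (simp add: continuous_within)
    then show ?thesis by (rule tendsto_within_subset) auto
  qed
  have th: "filterlim (\<lambda>s. s / 2) (at_right 0) (at_right (0::real))"
  proof (rule filterlim_at_withinI)
    show "filterlim (\<lambda>s. s / 2) (nhds 0) (at_right (0::real))"
      using tendsto_divide_zero[OF tendsto_ident_at[of 0 "{0<..}"], of 2] by simp
    show "\<forall>\<^sub>F x in at_right 0. x / 2 \<in> {0<..} - {0::real}"
      using eventually_at_right_less[of "0::real"] by eventually_elim auto
  qed
  have t2: "((\<lambda>s. w s - w (s / 2)) \<longlongrightarrow> 0) (at_right 0)"
    using tendsto_diff[OF tw filterlim_compose[OF tw th]] by simp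
  have gb: "\<bar>g r\<bar> \<le> 2 * K * r ^ n" if hr: "0 < r" "r \<le> 1" for r
  proof (rule ccontr)
    assume nb: "\<not> ?thesis"
    define d where "d = \<bar>g r\<bar> - K * r ^ n"
    have rn0: "0 \<le> K * r ^ n" using Kpos hr by simp
    have dpos: "d > 0" using nb rn0 unfolding d_def by simp
    have gl: "\<bar>g z\<bar> \<ge> d" if "0 < z" "z < r" for z
      using gb1[of z r] that hr unfolding d_def by linarith
    have wdiff: "\<bar>w s - w (s / 2)\<bar> \<ge> d / 2" if hs: "0 < s" "s < r" for s
    proof -
      obtain z where z: "s / 2 < z" "z < s" "w s - w (s / 2) = (s - s / 2) * w' z"
      proof -
        have "\<exists>z. s / 2 < z \<and> z < s \<and> w s - w (s / 2) = (s - s / 2) * w' z"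
          by (rule MVT2) (use hs in simp, rule wD, use hs in linarith)
        then show ?thesis using that by blast
      qed
      have zpos: "z > 0" using z hs by simp
      have zs: "z ^ (n - 1) \<le> s ^ (n - 1)" using z zpos by (intro power_mono) auto
      have zp: "z ^ (n - 1) > 0" using zpos by simp
      have w'z: "\<bar>w' z\<bar> = \<bar>g z\<bar> / z ^ (n - 1)" using zp zpos unfolding g_def by (simp add: abs_mult)
      have "d / s ^ (n - 1) \<le> d / z ^ (n - 1)"
        using zs zp dpos by (intro divide_left_mono) auto
      also have "\<dots> \<le> \<bar>g z\<bar> / z ^ (n - 1)"
        using gl[of z] zpos z hs zp by (intro divide_right_mono) auto
      finally have A: "d / s ^ (n - 1) \<le> \<bar>w' z\<bar>" using w'z by simp
      have sp: "s ^ (n - 1) > 0" using hs by simp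
      have ss: "s ^ (n - 1) \<le> s"
      proof -
        have "s ^ (n - 1) = s * s ^ (n - 1 - 1)" using pow_split[of "n - 1" s] n by simp
        also have "\<dots> \<le> s * 1" using hs hr by (intro mult_left_mono power_le_one) auto
        finally show ?thesis by simp
      qed
      have "d / 2 \<le> (s / 2) * (d / s ^ (n - 1))"
      proof -
        have "d \<le> s * (d / s ^ (n - 1))"
          using ss sp dpos by (simp add: field_simps mult_left_mono)
        then show ?thesis by simp
      qed
      also have "\<dots> \<le> (s / 2) * \<bar>w' z\<bar>" using A hs by (intro mult_left_mono) auto
      also have "\<dots> = \<bar>w s - w (s / 2)\<bar>"
      proof -
        have "\<bar>w s - w (s / 2)\<bar> = \<bar>s - s / 2\<bar> * \<bar>w' z\<bar>" unfolding z(3) by (simp only: abs_mult)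
        then show ?thesis using hs by simp
      qed
      finally show ?thesis .
    qed
    have ev1: "\<forall>\<^sub>F s in at_right 0. \<bar>w s - w (s / 2)\<bar> < d / 2"
    proof -
      have "\<forall>e>0. \<forall>\<^sub>F x in at_right 0. \<bar>w x - w (x / 2)\<bar> < e"
        using t2 by (auto simp: tendsto_iff dist_real_def)
      then show ?thesis using dpos by (meson half_gt_zero)
    qed
    have ev2: "\<forall>\<^sub>F s in at_right 0. 0 < s \<and> s < r"
      using eventually_at_right_real[OF hr(1)] by eventually_elim auto
    have "\<forall>\<^sub>F s in at_right (0::real). False"
      using ev1 ev2 by eventually_elim (use wdiff in force)
    then show False by simp
  qed
  have wge: "w 0 > 0" unfolding w_def using pos[of 0] by simp
  have ev3: "\<forall>\<^sub>F r in at_right 0. w 0 / 2 < w r"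
    by (rule order_tendstoD(1)[OF tw]) (use wge in simp)
  have t3: "((\<lambda>r. 2 * \<beta> * K * r ^ 2) \<longlongrightarrow> 0) (at_right (0::real))"
  proof -
    have "((\<lambda>r. r ^ 2) \<longlongrightarrow> (0::real)) (at_right 0)"
      using tendsto_power[OF tendsto_ident_at[of 0 "{0<..}"], of 2] by simp
    then show ?thesis by (rule tendsto_mult_right_zero)
  qed
  have amw: "\<alpha> * m * w 0 / 2 > 0" using apos m_pos wge by simp
  have ev4: "\<forall>\<^sub>F r in at_right 0. 2 * \<beta> * K * r ^ 2 < \<alpha> * m * w 0 / 2"
    using order_tendstoD(2)[OF t3 amw] .
  have ev5: "\<forall>\<^sub>F r in at_right 0. 0 < r \<and> r < (1::real)"
    using eventually_at_right_real[OF zero_less_one] by eventually_elim auto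
  have Hev: "\<forall>\<^sub>F r in at_right 0. H r > 0"
    using ev3 ev4 ev5
  proof eventually_elim
    case (elim r)
    then have r0: "0 < r" "r \<le> 1" by auto
    have e1: "g r = r ^ (n - 2) * (r * w' r)"
    proof -
      have "r ^ (n - 1) = r * r ^ (n - 2)" using pow_split[of "n - 1" r] n by (simp add: numeral_2_eq_2)
      then show ?thesis unfolding g_def by (simp add: mult_ac)
    qed
    have e2: "r ^ n = r ^ 2 * r ^ (n - 2)"
    proof -
      have "n = 2 + (n - 2)" using n by simp
      then have "r ^ n = r ^ (2 + (n - 2))" by (metis)
      then show ?thesis by (simp only: power_add)
    qed
    have rp: "r ^ (n - 2) > 0" using r0 by simp
    have "r ^ (n - 2) * \<bar>r * w' r\<bar> \<le> r ^ (n - 2) * (2 * K * r ^ 2)"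
      using gb[OF r0] rp unfolding e1 e2 by (simp add: abs_mult mult_ac)
    then have b1: "\<bar>r * w' r\<bar> \<le> 2 * K * r ^ 2" using rp by simp
    have b2: "\<beta> * \<bar>r * w' r\<bar> \<le> \<beta> * (2 * K * r ^ 2)" using b1 bpos by (intro mult_left_mono) auto
    have b3: "\<beta> * r * w' r \<ge> - (\<beta> * \<bar>r * w' r\<bar>)"
    proof -
      have x: "- \<bar>r * w' r\<bar> \<le> r * w' r" using abs_ge_minus_self[of "r * w' r"] by linarith
      have "\<beta> * (- \<bar>r * w' r\<bar>) \<le> \<beta> * (r * w' r)" using mult_left_mono[OF x] bpos by simp
      then show ?thesis by (simp add: mult.assoc)
    qed
    have b4: "\<alpha> * m * (w 0 / 2) < \<alpha> * m * w r"
      using elim apos m_pos by (intro mult_strict_left_mono) auto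
    show ?case unfolding H_def using b2 b3 b4 elim by (simp add: algebra_simps)
  qed
  obtain b where bb: "b > 0" "\<And>y. 0 < y \<Longrightarrow> y < b \<Longrightarrow> H y > 0"
    using Hev by (auto simp: eventually_at_right_field)
  define \<delta> where "\<delta> = b / 2"
  have \<delta>pos: "\<delta> > 0" "\<delta> < b" using bb unfolding \<delta>_def by auto
  have Hpos: "H r > 0" if rpos: "r > 0" for r
  proof (rule ccontr)
    assume "\<not> H r > 0"
    then have Hr: "H r \<le> 0" by simp
    have r\<delta>: "\<delta> < r" using bb(2)[of r] rpos \<delta>pos Hr by (cases "r < b") auto
    define S where "S = {x \<in> {\<delta>..r}. H x \<le> (\<lambda>_. 0) x}"
    have Hc: "continuous_on {\<delta>..r} H"
      using \<delta>pos by (intro continuous_at_imp_continuous_on ballI DERIV_isCont[OF HD]) auto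
    have cS: "closed S" unfolding S_def
      by (rule continuous_on_closed_Collect_le[OF Hc continuous_on_const]) simp
    have rS: "r \<in> S" unfolding S_def using Hr r\<delta> by auto
    have bS: "bdd_below S" unfolding S_def by (rule bdd_belowI[of _ \<delta>]) auto
    define r0 where "r0 = Inf S"
    have r0S: "r0 \<in> S" unfolding r0_def using closed_contains_Inf[OF _ bS cS] rS by auto
    then have r0p: "\<delta> \<le> r0" "r0 \<le> r" "H r0 \<le> 0" unfolding S_def by auto
    have r0pos: "r0 > 0" using r0p \<delta>pos by simp
    have Hleft: "H y > 0" if "0 < y" "y < r0" for y
    proof (cases "y < b")
      case True then show ?thesis using bb that by auto
    next
      case False
      show ?thesis
      proof (rule ccontr)
        assume "\<not> H y > 0"
        then have "y \<in> S" unfolding S_def using False \<delta>pos that r0p by auto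
        then have "r0 \<le> y" unfolding r0_def using bS by (rule cInf_lower)
        then show False using that by simp
      qed
    qed
    have gdec: "g t < g s" if hst: "0 < s" "s < t" "t \<le> r0" for s t
    proof -
      obtain z where z: "s < z" "z < t" "g t - g s = (t - s) * (- (z ^ (n - 1) * v z powr (1 - m) * H z / (real n - 1)))"
      proof -
        have "\<exists>z. s < z \<and> z < t \<and> g t - g s = (t - s) * (- (z ^ (n - 1) * v z powr (1 - m) * H z / (real n - 1)))"
          by (rule MVT2[OF hst(2)]) (rule gD, use hst in linarith)
        then show ?thesis using that by blast
      qed
      have zp: "0 < z" using z hst by simp
      have q: "0 < z ^ (n - 1) * v z powr (1 - m) * H z / (real n - 1)"
        using zp pos[of z] Hleft[of z] z hst n1 by simp
      have "0 < (t - s) * (z ^ (n - 1) * v z powr (1 - m) * H z / (real n - 1))"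
        using q hst by (intro mult_pos_pos) auto
      then have "g t - g s < 0" unfolding z(3) by linarith
      then show ?thesis by simp
    qed
    have gle0: "g t \<le> 0" if ht: "0 < t" "t \<le> r0" for t
    proof (rule ccontr)
      assume "\<not> g t \<le> 0"
      then have gt: "g t > 0" by simp
      define s where "s = min (t / 2) (min (1 / 2) (g t / (4 * K + 1)))"
      have sp: "0 < s" "s < t" "s \<le> 1" "s \<le> g t / (4 * K + 1)"
        unfolding s_def using ht gt Kpos by auto
      have c1: "g t < g s" using gdec[OF sp(1) sp(2) ht(2)] .
      have c2: "g s \<le> 2 * K * s ^ n" using gb[OF sp(1) sp(3)] by simp
      have c3: "2 * K * s ^ n \<le> 2 * K * s"
      proof -
        have "s ^ n \<le> s ^ 1" using sp n by (intro power_decreasing) auto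
        then show ?thesis using Kpos by (intro mult_left_mono) auto
      qed
      have c4: "2 * K * s \<le> 2 * K * (g t / (4 * K + 1))" using sp Kpos by (intro mult_left_mono) auto
      have c5: "2 * K * (g t / (4 * K + 1)) < g t"
      proof -
        have "2 * K / (4 * K + 1) < 1" using Kpos by simp
        then have "g t * (2 * K / (4 * K + 1)) < g t * 1" using gt by (intro mult_strict_left_mono) auto
        then show ?thesis by (simp add: mult_ac)
      qed
      show False using c1 c2 c3 c4 c5 by linarith
    qed
    have gr0: "g r0 < 0" using gdec[of "r0 / 2" r0] gle0[of "r0 / 2"] r0pos by simp
    have w'r0: "w' r0 < 0"
    proof -
      have "r0 ^ (n - 1) > 0" using r0pos by simp
      then show ?thesis using gr0 r0pos unfolding g_def by (simp add: mult_less_0_iff)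
    qed
    have Dpos: "c * w' r0 - \<beta> * r0 * v r0 powr (1 - m) * H r0 / (real n - 1) > 0"
    proof -
      have "c * w' r0 > 0" using cneg w'r0 by (simp add: mult_neg_neg)
      moreover have "\<beta> * r0 * v r0 powr (1 - m) * H r0 \<le> 0"
        using bpos r0pos pos[of r0] r0p by (simp add: mult_nonneg_nonpos)
      then have "\<beta> * r0 * v r0 powr (1 - m) * H r0 / (real n - 1) \<le> 0"
        using n1 by (simp add: divide_nonpos_pos)
      ultimately show ?thesis by linarith
    qed
    obtain d where d: "d > 0" "\<And>h. h > 0 \<Longrightarrow> h < d \<Longrightarrow> H (r0 - h) < H r0"
      using DERIV_pos_inc_left[OF HD[OF r0pos] Dpos] by blast
    define h where "h = min d r0 / 2"
    have hp: "h > 0" "h < d" "h < r0" unfolding h_def using d r0pos by auto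
    have "H (r0 - h) < H r0" using d(2) hp by simp
    moreover have "H (r0 - h) > 0" using Hleft[of "r0 - h"] hp by simp
    ultimately show False using r0p by simp
  qed
  define p where "p = (\<lambda>r. r powr a * w r)"
  have pD: "(p has_real_derivative (r powr (a - 1) * H r / \<beta>)) (at r)" if rp: "r > 0" for r
  proof -
    have d: "(p has_real_derivative (a * r powr (a - 1) * w r + w' r * r powr a)) (at r)"
      unfolding p_def by (rule DERIV_mult[OF has_real_derivative_powr[OF rp] wD[OF rp]])
    have ra: "r powr a = r powr (a - 1) * r" using powr_add[of r "a - 1" 1] rp by simp
    have "H r / \<beta> = a * w r + r * w' r" unfolding H_def a_def using bpos by (simp add: field_simps)
    then have "r powr (a - 1) * H r / \<beta> = r powr (a - 1) * (a * w r + r * w' r)"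
      by (metis times_divide_eq_right)
    then have "a * r powr (a - 1) * w r + w' r * r powr a = r powr (a - 1) * H r / \<beta>"
      unfolding ra by (simp add: algebra_simps)
    then show ?thesis using d by simp
  qed
  have pmono: "p 1 \<le> p r" if r1: "r \<ge> 1" for r
  proof (cases "r = 1")
    case True then show ?thesis by simp
  next
    case False
    then have r1': "1 < r" using r1 by simp
    obtain z where z: "1 < z" "z < r" "p r - p 1 = (r - 1) * (z powr (a - 1) * H z / \<beta>)"
    proof -
      have "\<exists>z. 1 < z \<and> z < r \<and> p r - p 1 = (r - 1) * (z powr (a - 1) * H z / \<beta>)"
        by (rule MVT2[OF r1']) (rule pD, linarith)
      then show ?thesis using that by blast
    qed
    have "0 < z powr (a - 1) * H z / \<beta>" using z Hpos[of z] bpos by simp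
    then have "0 < (r - 1) * (z powr (a - 1) * H z / \<beta>)" using r1' by (intro mult_pos_pos) auto
    then show ?thesis using z(3) by linarith
  qed
  have p1: "p 1 > 0" unfolding p_def w_def using pos[of 1] by simp
  have lim: "filterlim (\<lambda>r. p 1 * r powr (real n - 2 - a)) at_top at_top"
    by (rule filterlim_tendsto_pos_mult_at_top[OF tendsto_const p1 real_powr_at_top]) (use alt in simp)
  have ev: "\<forall>\<^sub>F r in at_top. p 1 * r powr (real n - 2 - a) \<le> r ^ (n - 2) * v r powr m"
    using eventually_ge_at_top[of "1::real"]
  proof eventually_elim
    case (elim r)
    then have rp: "r > 0" by simp
    have "r ^ (n - 2) = r powr (real n - 2)" using rp n powr_realpow[OF rp, of "n - 2"] by simp
    also have "\<dots> = r powr (real n - 2 - a) * r powr a" using powr_add[of r "real n - 2 - a" a] by simp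
    finally have e: "r ^ (n - 2) * v r powr m = r powr (real n - 2 - a) * p r"
      unfolding p_def w_def by (simp add: mult_ac)
    have "p 1 * r powr (real n - 2 - a) \<le> p r * r powr (real n - 2 - a)"
      using pmono[OF elim] by (intro mult_right_mono) auto
    then show ?case using e by (simp add: mult_ac)
  qed
  show ?thesis by (rule filterlim_at_top_mono[OF lim ev])
qed

end
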